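(* Let $\mathcal{A}$ be a parity automaton with costs and let $(\rho_j^1)_{j\in\mathbb{N}}$ and $(\rho_j^2)_{j\in\mathbb{N}}$ be sequences of non-empty finite runs of $\mathcal{A}$ such that $\rho_j^1$ and $\rho_j^2$ have the same type for every $j$, and such that $\sup_j|\rho_j^1|<\infty$ and $\sup_j|\rho_j^2|<\infty$ (where $|\rho|$ is the number of transitions of $\rho$). Then $\rho_0^1\rho_1^1\rho_2^1\cdots$ is an accepting run if, and only if, $\rho_0^2\rho_1^2\rho_2^2\cdots$ is an accepting run.
   Context: A parity automaton with costs is a tuple $\mathcal{A}=(Q,\Sigma,q_I,\delta,\Omega,\mathrm{Cst})$ with a finite set $Q$ of states, a finite alphabet $\Sigma$, an initial state $q_I\in Q$, a deterministic complete transition function $\delta\colon Q\times\Sigma\to Q$ (also viewed as the set of transitions $(q,a,\delta(q,a))$), a coloring $\Omega\colon Q\to\mathbb{N}$, and a cost function $\mathrm{Cst}$ assigning to every transition either $\epsilon$ or $\mathtt{i}$ (the latter are called increment-transitions). Throughout, $\Omega(Q)$ contains both an even and an odd color. A run from $q_0$ on $a_0a_1\cdots$ is the sequence of transitions $(q_0,a_0,q_1)(q_1,a_1,q_2)\cdots$ with $q_{j+1}=\delta(q_j,a_j)$; the cost of a finite run is its number of increment-transitions. For odd $c$, let $\mathrm{Ans}(c)=\{c'\in\Omega(Q)\mid c'>c,\ c'\text{ even}\}$. For an infinite run $\rho=(q_0,a_0,q_1)(q_1,a_1,q_2)\cdots$ and $n\in\mathbb{N}$, $\mathrm{Cor}(\rho,n)=0$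 if $\Omega(q_n)$ is even, and otherwise $\mathrm{Cor}(\rho,n)$ is the minimum of the costs of $(q_n,a_n,q_{n+1})\cdots(q_{n'-1},a_{n'-1},q_{n'})$ over all $n'>n$ with $\Omega(q_{n'})\in\mathrm{Ans}(\Omega(q_n))$, with $\min\emptyset=\infty$. An infinite run $\rho$ is accepting if $\limsup_{n\to\infty}\mathrm{Cor}(\rho,n)<\infty$. The type of a non-empty finite run $(q_0,a_0,q_1)\cdots(q_{n-1},a_{n-1},q_n)$ is $(q_0,q_n,c_0,c_1,\ell)$ where (with $\max\emptyset=\bot$) $c_0=\max\{\Omega(q_j)\mid 0\le j\le n,\ \Omega(q_j)\text{ even}\}$, $c_1=\max\{\Omega(q_j)\mid 0\le j\le n,\ \Omega(q_j)\text{ odd},\ \Omega(q_{j'})\notin\mathrm{Ans}(\Omega(q_j))\text{ for all }j<j'\le n\}$, and $\ell=\mathtt{i}$ iff the run contains an increment-transition, $\ell=\epsilon$ otherwise. *)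

theory Defs
  imports Main "HOL-Library.Extended_Nat" "HOL-Library.Liminf_Limsup"
begin

(* A parity automaton with costs over a finite state type 'q and finite alphabet 'a
   is given by delta :: 'q => 'a => 'q (deterministic, complete), a colouring
   Omega :: 'q => nat and a cost function Cst :: 'q => 'a => bool, where
   Cst q a = True means the transition (q, a, delta q a) is an increment-transition
   and False means it is an epsilon-transition.  The initial state plays no role here. *)

type_synonym ('q,'a) trans = "'q \<times> 'a \<times> 'q"

definition src :: "('q,'a) trans \<Rightarrow> 'q" where "src t = fst t"
definition lbl :: "('q,'a) trans \<Rightarrow> 'a" where "lbl t = fst (snd t)"
definition tgt :: "('q,'a) trans \<Rightarrow> 'q" where "tgt t = snd (snd t)"

definition is_trans :: "('q \<Rightarrow> 'a \<Rightarrow> 'q) \<Rightarrow> ('q,'a) trans \<Rightarrow> bool" where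
  "is_trans \<delta> t \<longleftrightarrow> tgt t = \<delta> (src t) (lbl t)"

definition is_incr :: "('q \<Rightarrow> 'a \<Rightarrow> bool) \<Rightarrow> ('q,'a) trans \<Rightarrow> bool" where
  "is_incr Cst t \<longleftrightarrow> Cst (src t) (lbl t)"

definition fin_run :: "('q \<Rightarrow> 'a \<Rightarrow> 'q) \<Rightarrow> ('q,'a) trans list \<Rightarrow> bool" where
  "fin_run \<delta> \<rho> \<longleftrightarrow> \<rho> \<noteq> [] \<and> (\<forall>t\<in>set \<rho>. is_trans \<delta> t)
     \<and> (\<forall>i. Suc i < length \<rho> \<longrightarrow> tgt (\<rho> ! i) = src (\<rho> ! Suc i))"

definition inf_run :: "('q \<Rightarrow> 'a \<Rightarrow> 'q) \<Rightarrow> (nat \<Rightarrow> ('q,'a) trans) \<Rightarrow> bool" where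
  "inf_run \<delta> r \<longleftrightarrow> (\<forall>n. is_trans \<delta> (r n) \<and> tgt (r n) = src (r (Suc n)))"

definition Ans :: "('q \<Rightarrow> nat) \<Rightarrow> nat \<Rightarrow> nat set" where
  "Ans \<Omega> c = {c' \<in> range \<Omega>. c' > c \<and> even c'}"

definition cost_inf :: "('q \<Rightarrow> 'a \<Rightarrow> bool) \<Rightarrow> (nat \<Rightarrow> ('q,'a) trans) \<Rightarrow> nat \<Rightarrow> nat \<Rightarrow> nat" where
  "cost_inf Cst r n n' = card {j. n \<le> j \<and> j < n' \<and> is_incr Cst (r j)}"

definition Cor :: "('q \<Rightarrow> nat) \<Rightarrow> ('q \<Rightarrow> 'a \<Rightarrow> bool) \<Rightarrow> (nat \<Rightarrow> ('q,'a) trans) \<Rightarrow> nat \<Rightarrow> enat" where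
  "Cor \<Omega> Cst r n = (if even (\<Omega> (src (r n))) then 0
     else (INF n' \<in> {n'. n' > n \<and> \<Omega> (src (r n')) \<in> Ans \<Omega> (\<Omega> (src (r n)))}.
             enat (cost_inf Cst r n n')))"

definition accepting_run :: "('q \<Rightarrow> 'a \<Rightarrow> 'q) \<Rightarrow> ('q \<Rightarrow> nat) \<Rightarrow> ('q \<Rightarrow> 'a \<Rightarrow> bool)
    \<Rightarrow> (nat \<Rightarrow> ('q,'a) trans) \<Rightarrow> bool" where
  "accepting_run \<delta> \<Omega> Cst r \<longleftrightarrow> inf_run \<delta> r \<and> limsup (\<lambda>n. Cor \<Omega> Cst r n) < \<infinity>"

definition fstates :: "('q,'a) trans list \<Rightarrow> 'q list" where
  "fstates \<rho> = map src \<rho> @ [tgt (last \<rho>)]"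

(* max with max {} = bottom, represented by None *)
definition max_opt :: "nat set \<Rightarrow> nat option" where
  "max_opt S = (if S = {} then None else Some (Max S))"

definition run_type :: "('q \<Rightarrow> nat) \<Rightarrow> ('q \<Rightarrow> 'a \<Rightarrow> bool) \<Rightarrow> ('q,'a) trans list
    \<Rightarrow> 'q \<times> 'q \<times> nat option \<times> nat option \<times> bool" where
  "run_type \<Omega> Cst \<rho> =
    (let qs = fstates \<rho>; n = length \<rho> in
     (src (hd \<rho>), tgt (last \<rho>),
      max_opt {\<Omega> (qs ! j) | j. j \<le> n \<and> even (\<Omega> (qs ! j))},
      max_opt {\<Omega> (qs ! j) | j. j \<le> n \<and> odd (\<Omega> (qs ! j))
                 \<and> (\<forall>j'. j < j' \<and> j' \<le> n \<longrightarrow> \<Omega> (qs ! j') \<notin> Ans \<Omega> (\<Omega> (qs ! j)))},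
      (\<exists>t\<in>set \<rho>. is_incr Cst t)))"
(* last component: True = letter i (contains an increment-transition), False = epsilon *)

(* infinite concatenation rho_0 rho_1 rho_2 ... of a sequence of non-empty lists *)
definition offs :: "(nat \<Rightarrow> 'x list) \<Rightarrow> nat \<Rightarrow> nat" where
  "offs R k = (\<Sum>i<k. length (R i))"

definition concat_inf :: "(nat \<Rightarrow> 'x list) \<Rightarrow> nat \<Rightarrow> 'x" where
  "concat_inf R n = (let k = (GREATEST k. offs R k \<le> n) in R k ! (n - offs R k))"

end

theory Submission
  imports Defs
begin

lemma offs_Suc: "offs R (Suc k) = offs R k + length (R k)"
  by (simp add: offs_def)

lemma offs_0[simp]: "offs R 0 = 0" by (simp add: offs_def)

lemma offs_mono: "k \<le> k' \<Longrightarrow> offs R k \<le> offs R k'"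
  by (induction k' rule: dec_induct) (auto simp: offs_Suc)

lemma offs_ge: "\<forall>k. R k \<noteq> [] \<Longrightarrow> k \<le> offs R k"
proof (induction k)
  case (Suc k)
  have "length (R k) \<ge> 1" using Suc.prems by (simp add: Suc_le_eq)
  then show ?case using Suc by (simp add: offs_Suc)
qed simp

lemma concat_at:
  assumes ne: "\<forall>k. R k \<noteq> []" and i: "i < length (R k)"
  shows "concat_inf R (offs R k + i) = R k ! i"
proof -
  have "(GREATEST k'. offs R k' \<le> offs R k + i) = k"
  proof (rule Greatest_equality)
    show "offs R k \<le> offs R k + i" by simp
    fix y assume "offs R y \<le> offs R k + i"
    show "y \<le> k"
    proof (rule ccontr)
      assume "\<not> y \<le> k" then have "Suc k \<le> y" by simp
      then have "offs R (Suc k) \<le> offs R y" by (rule offs_mono)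
      with \<open>offs R y \<le> offs R k + i\<close> i show False by (simp add: offs_Suc)
    qed
  qed
  then show ?thesis by (simp add: concat_inf_def Let_def)
qed

lemma block_decomp:
  assumes ne: "\<forall>k. R k \<noteq> []"
  shows "\<exists>k i. i < length (R k) \<and> n = offs R k + i"
proof -
  have "n < offs R (Suc n)" using offs_ge[OF ne, of "Suc n"] by simp
  then obtain k where "\<forall>i\<le>k. \<not> n < offs R i" "n < offs R (Suc k)"
    using ex_least_nat_less[of "\<lambda>k. n < offs R k" "Suc n"] by auto
  then have "offs R k \<le> n" "n < offs R k + length (R k)" by (auto simp: offs_Suc)
  then show ?thesis by (intro exI[of _ k] exI[of _ "n - offs R k"]) auto
qed

lemma inf_run_iff:
  assumes fr: "\<And>k. fin_run \<delta> (R k)"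
  shows "inf_run \<delta> (concat_inf R) \<longleftrightarrow> (\<forall>k. tgt (last (R k)) = src (hd (R (Suc k))))"
proof -
  have ne: "\<forall>k. R k \<noteq> []" using fr by (simp add: fin_run_def)
  show ?thesis
  proof
    assume ir: "inf_run \<delta> (concat_inf R)"
    show "\<forall>k. tgt (last (R k)) = src (hd (R (Suc k)))"
    proof
      fix k
      define l where "l = length (R k)"
      have l: "l > 0" using ne by (simp add: l_def)
      have "tgt (concat_inf R (offs R k + (l - 1))) = src (concat_inf R (Suc (offs R k + (l - 1))))"
        using ir by (simp add: inf_run_def)
      moreover have "concat_inf R (offs R k + (l - 1)) = last (R k)"
        using concat_at[OF ne, of "l - 1" k] l ne by (simp add: l_def last_conv_nth del: One_nat_def)
      moreover have "Suc (offs R k + (l - 1)) = offs R (Suc k) + 0" using l by (simp add: offs_Suc l_def)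
      moreover have "concat_inf R (offs R (Suc k) + 0) = hd (R (Suc k))"
        using concat_at[OF ne, of 0 "Suc k"] ne by (simp add: hd_conv_nth)
      ultimately show "tgt (last (R k)) = src (hd (R (Suc k)))" by simp
    qed
  next
    assume ch: "\<forall>k. tgt (last (R k)) = src (hd (R (Suc k)))"
    show "inf_run \<delta> (concat_inf R)"
      unfolding inf_run_def
    proof
      fix n
      obtain k i where ki: "i < length (R k)" "n = offs R k + i" using block_decomp[OF ne] by blast
      have rn: "concat_inf R n = R k ! i" using concat_at[OF ne ki(1)] ki(2) by simp
      have "is_trans \<delta> (concat_inf R n)" using fr[of k] ki(1) rn by (auto simp: fin_run_def)
      moreover have "tgt (concat_inf R n) = src (concat_inf R (Suc n))"
      proof (cases "Suc i < length (R k)")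
        case True
        then have "concat_inf R (Suc n) = R k ! Suc i" using concat_at[OF ne True] ki(2) by simp
        then show ?thesis using fr[of k] True rn by (simp add: fin_run_def)
      next
        case False
        then have "Suc i = length (R k)" using ki(1) by simp
        then have "Suc n = offs R (Suc k) + 0" using ki(2) by (simp add: offs_Suc)
        then have "concat_inf R (Suc n) = hd (R (Suc k))"
          using concat_at[OF ne, of 0 "Suc k"] ne by (simp add: hd_conv_nth)
        moreover have "R k ! i = last (R k)" using \<open>Suc i = length (R k)\<close>
          by (metis diff_Suc_1 last_conv_nth list.size(3) nat.simps(3))
        ultimately show ?thesis using ch rn by simp
      qed
      ultimately show "is_trans \<delta> (concat_inf R n) \<and> tgt (concat_inf R n) = src (concat_inf R (Suc n))" ..
    qed
  qed
qed

lemma state_at: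
  assumes fr: "\<And>k. fin_run \<delta> (R k)" and ir: "inf_run \<delta> (concat_inf R)"
    and i: "i \<le> length (R k)"
  shows "src (concat_inf R (offs R k + i)) = fstates (R k) ! i"
proof -
  have ne: "\<forall>k. R k \<noteq> []" using fr by (simp add: fin_run_def)
  show ?thesis
  proof (cases "i < length (R k)")
    case True
    then show ?thesis using concat_at[OF ne True] by (simp add: fstates_def nth_append)
  next
    case False
    then have il: "i = length (R k)" using i by simp
    define l where "l = length (R k)"
    have l: "l > 0" using ne by (simp add: l_def)
    have "tgt (concat_inf R (offs R k + (l - 1))) = src (concat_inf R (Suc (offs R k + (l - 1))))"
      using ir by (simp add: inf_run_def)
    moreover have "concat_inf R (offs R k + (l - 1)) = last (R k)"
      using concat_at[OF ne, of "l - 1" k] l ne by (simp add: l_def last_conv_nth del: One_nat_def)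
    moreover have "Suc (offs R k + (l - 1)) = offs R k + i" using l il by (simp add: l_def)
    ultimately have "src (concat_inf R (offs R k + i)) = tgt (last (R k))" by metis
    then show ?thesis using il by (simp add: fstates_def nth_append)
  qed
qed

lemma cost_split:
  assumes "a \<le> c" "c \<le> b"
  shows "cost_inf Cst r a b = cost_inf Cst r a c + cost_inf Cst r c b"
proof -
  have "{j. a \<le> j \<and> j < b \<and> is_incr Cst (r j)} =
        {j. a \<le> j \<and> j < c \<and> is_incr Cst (r j)} \<union> {j. c \<le> j \<and> j < b \<and> is_incr Cst (r j)}"
    using assms by auto
  moreover have "finite {j. a \<le> j \<and> j < c \<and> is_incr Cst (r j)}"
    by (rule finite_subset[of _ "{..<c}"]) auto
  moreover have "finite {j. c \<le> j \<and> j < b \<and> is_incr Cst (r j)}"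
    by (rule finite_subset[of _ "{..<b}"]) auto
  ultimately show ?thesis unfolding cost_inf_def
    by (simp add: card_Un_disjoint disjoint_iff)
qed

lemma cost_le_len: "cost_inf Cst r a b \<le> b - a"
proof -
  have "cost_inf Cst r a b \<le> card {a..<b}" unfolding cost_inf_def
    by (rule card_mono) auto
  then show ?thesis by simp
qed

lemma cost_mono: "a' \<le> a \<Longrightarrow> b \<le> b' \<Longrightarrow> cost_inf Cst r a b \<le> cost_inf Cst r a' b'"
  unfolding cost_inf_def
  by (rule card_mono) (rule finite_subset[of _ "{..<b'}"], auto)

lemma cost_blocks:
  assumes "a \<le> b"
  shows "cost_inf Cst r (offs R a) (offs R b) = (\<Sum>k\<in>{a..<b}. cost_inf Cst r (offs R k) (offs R (Suc k)))"
  using assms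
proof (induction b rule: dec_induct)
  case base
  then show ?case by (simp add: cost_inf_def)
next
  case (step n)
  have "cost_inf Cst r (offs R a) (offs R (Suc n)) = cost_inf Cst r (offs R a) (offs R n) + cost_inf Cst r (offs R n) (offs R (Suc n))"
    by (rule cost_split) (auto intro: offs_mono simp: step.hyps)
  then show ?case using step by simp
qed

lemma block_cost_zero:
  assumes ne: "\<forall>k. R k \<noteq> []"
  shows "cost_inf Cst (concat_inf R) (offs R k) (offs R (Suc k)) = 0 \<longleftrightarrow> \<not> (\<exists>t\<in>set (R k). is_incr Cst t)"
proof -
  have fin: "finite {j. offs R k \<le> j \<and> j < offs R (Suc k) \<and> is_incr Cst (concat_inf R j)}"
    by (rule finite_subset[of _ "{..<offs R (Suc k)}"]) auto
  have "(\<exists>j. offs R k \<le> j \<and> j < offs R (Suc k) \<and> is_incr Cst (concat_inf R j)) \<longleftrightarrow>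
        (\<exists>i<length (R k). is_incr Cst (R k ! i))"
  proof
    assume "\<exists>j. offs R k \<le> j \<and> j < offs R (Suc k) \<and> is_incr Cst (concat_inf R j)"
    then obtain j where j: "offs R k \<le> j" "j < offs R (Suc k)" "is_incr Cst (concat_inf R j)" by blast
    then have "j - offs R k < length (R k)" "j = offs R k + (j - offs R k)" by (auto simp: offs_Suc)
    then show "\<exists>i<length (R k). is_incr Cst (R k ! i)" using concat_at[OF ne] j(3) by metis
  next
    assume "\<exists>i<length (R k). is_incr Cst (R k ! i)"
    then obtain i where i: "i < length (R k)" "is_incr Cst (R k ! i)" by blast
    then show "\<exists>j. offs R k \<le> j \<and> j < offs R (Suc k) \<and> is_incr Cst (concat_inf R j)"
      using concat_at[OF ne i(1)] by (intro exI[of _ "offs R k + i"]) (auto simp: offs_Suc)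
  qed
  also have "\<dots> \<longleftrightarrow> (\<exists>t\<in>set (R k). is_incr Cst t)" by (metis in_set_conv_nth)
  finally show ?thesis using fin unfolding cost_inf_def by auto
qed

lemma block_cost_le: "cost_inf Cst r (offs R k) (offs R (Suc k)) \<le> length (R k)"
  using cost_le_len[of Cst r "offs R k" "offs R (Suc k)"] by (simp add: offs_Suc)

lemma cor_le:
  assumes "odd (\<Omega> (src (r n)))" "n < n'" "\<Omega> (src (r n')) \<in> Ans \<Omega> (\<Omega> (src (r n)))"
    "cost_inf Cst r n n' \<le> M"
  shows "Cor \<Omega> Cst r n \<le> enat M"
proof -
  have "Cor \<Omega> Cst r n \<le> enat (cost_inf Cst r n n')"
    unfolding Cor_def using assms by (auto intro!: INF_lower2[of n'])
  also have "\<dots> \<le> enat M" using assms by simp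
  finally show ?thesis .
qed

lemma cor_ex:
  assumes "odd (\<Omega> (src (r n)))" "Cor \<Omega> Cst r n \<le> enat K"
  shows "\<exists>n'>n. \<Omega> (src (r n')) \<in> Ans \<Omega> (\<Omega> (src (r n))) \<and> cost_inf Cst r n n' \<le> K"
proof (rule ccontr)
  assume "\<not> ?thesis"
  then have "enat (Suc K) \<le> Cor \<Omega> Cst r n"
    unfolding Cor_def using assms(1) by (auto intro!: INF_greatest simp: not_le)
  then have "enat (Suc K) \<le> enat K" using assms(2) by (rule order_trans)
  then show False by simp
qed

lemma limsup_fin_iff:
  fixes f :: "nat \<Rightarrow> enat"
  shows "limsup f < \<infinity> \<longleftrightarrow> (\<exists>K N. \<forall>n\<ge>N. f n \<le> enat K)"
proof
  assume "limsup f < \<infinity>"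
  then have "(INF n. SUP m\<in>{n..}. f m) < \<infinity>" by (simp add: limsup_INF_SUP)
  then obtain N where "(SUP m\<in>{N..}. f m) < \<infinity>" unfolding INF_less_iff by blast
  then obtain K where K: "(SUP m\<in>{N..}. f m) = enat K" by (cases "(SUP m\<in>{N..}. f m)") auto
  have "\<forall>n\<ge>N. f n \<le> enat K"
  proof (intro allI impI)
    fix n assume "N \<le> n"
    then have "f n \<le> (SUP m\<in>{N..}. f m)" by (intro SUP_upper) auto
    then show "f n \<le> enat K" using K by simp
  qed
  then show "\<exists>K N. \<forall>n\<ge>N. f n \<le> enat K" by blast
next
  assume "\<exists>K N. \<forall>n\<ge>N. f n \<le> enat K"
  then obtain K N where "\<forall>n\<ge>N. f n \<le> enat K" by blast
  then have "limsup f \<le> enat K" by (intro Limsup_bounded) (auto simp: eventually_sequentially)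
  then show "limsup f < \<infinity>" using order_le_less_trans[of _ "enat K" \<infinity>] by simp
qed

definition C0set :: "('q \<Rightarrow> nat) \<Rightarrow> ('q,'a) trans list \<Rightarrow> nat set" where
  "C0set \<Omega> \<rho> = {\<Omega> (fstates \<rho> ! j) | j. j \<le> length \<rho> \<and> even (\<Omega> (fstates \<rho> ! j))}"

definition C1set :: "('q \<Rightarrow> nat) \<Rightarrow> ('q,'a) trans list \<Rightarrow> nat set" where
  "C1set \<Omega> \<rho> = {\<Omega> (fstates \<rho> ! j) | j. j \<le> length \<rho> \<and> odd (\<Omega> (fstates \<rho> ! j))
                 \<and> (\<forall>j'. j < j' \<and> j' \<le> length \<rho> \<longrightarrow> \<Omega> (fstates \<rho> ! j') \<notin> Ans \<Omega> (\<Omega> (fstates \<rho> ! j)))}"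

lemma run_type_eqD:
  assumes "run_type \<Omega> Cst \<rho>1 = run_type \<Omega> Cst \<rho>2"
  shows "src (hd \<rho>1) = src (hd \<rho>2)" "tgt (last \<rho>1) = tgt (last \<rho>2)"
    "max_opt (C0set \<Omega> \<rho>1) = max_opt (C0set \<Omega> \<rho>2)"
    "max_opt (C1set \<Omega> \<rho>1) = max_opt (C1set \<Omega> \<rho>2)"
    "(\<exists>t\<in>set \<rho>1. is_incr Cst t) \<longleftrightarrow> (\<exists>t\<in>set \<rho>2. is_incr Cst t)"
  using assms unfolding run_type_def Let_def C0set_def C1set_def by simp_all

lemma fin_C0: "finite (C0set \<Omega> \<rho>)"
  unfolding C0set_def by (rule finite_image_set) simp

lemma fin_C1: "finite (C1set \<Omega> \<rho>)"
  unfolding C1set_def by (rule finite_image_set) simp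

lemma max_opt_ge: "finite S \<Longrightarrow> x \<in> S \<Longrightarrow> \<exists>m. max_opt S = Some m \<and> x \<le> m"
  unfolding max_opt_def by auto

lemma max_opt_in: "finite S \<Longrightarrow> max_opt S = Some m \<Longrightarrow> m \<in> S"
  unfolding max_opt_def by (cases "S = {}") (auto intro: Max_in)

lemma main:
  assumes fr1: "\<And>j. fin_run \<delta> (R1 j)" and fr2: "\<And>j. fin_run \<delta> (R2 j)"
    and ty: "\<And>j. run_type \<Omega> Cst (R1 j) = run_type \<Omega> Cst (R2 j)"
    and B1: "\<And>j. length (R1 j) \<le> B" and B2: "\<And>j. length (R2 j) \<le> B"
    and ir1: "inf_run \<delta> (concat_inf R1)" and ir2: "inf_run \<delta> (concat_inf R2)"
    and bnd: "\<And>n. N \<le> n \<Longrightarrow> Cor \<Omega> Cst (concat_inf R1) n \<le> enat K"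
    and nN: "offs R2 N \<le> n"
  shows "Cor \<Omega> Cst (concat_inf R2) n \<le> enat ((K + 2) * B)"
proof -
  have ne1: "\<forall>k. R1 k \<noteq> []" using fr1 by (simp add: fin_run_def)
  have ne2: "\<forall>k. R2 k \<noteq> []" using fr2 by (simp add: fin_run_def)
  let ?r1 = "concat_inf R1" and ?r2 = "concat_inf R2"
  obtain j i where ji: "i < length (R2 j)" "n = offs R2 j + i" using block_decomp[OF ne2] by blast
  have jN: "N \<le> j"
  proof (rule ccontr)
    assume "\<not> N \<le> j"
    then have "offs R2 (Suc j) \<le> offs R2 N" by (intro offs_mono) simp
    then show False using nN ji by (simp add: offs_Suc)
  qed
  have sn: "src (?r2 n) = fstates (R2 j) ! i" using state_at[OF fr2 ir2, of i j] ji by simp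
  show ?thesis
  proof (cases "even (\<Omega> (src (?r2 n)))")
    case True
    then show ?thesis by (simp add: Cor_def)
  next
    case odd: False
    define c where "c = \<Omega> (fstates (R2 j) ! i)"
    have oddc: "odd c" using odd sn by (simp add: c_def)
    show ?thesis
    proof (cases "\<exists>i'. i < i' \<and> i' \<le> length (R2 j) \<and> \<Omega> (fstates (R2 j) ! i') \<in> Ans \<Omega> c")
      case True
      then obtain i' where i': "i < i'" "i' \<le> length (R2 j)" "\<Omega> (fstates (R2 j) ! i') \<in> Ans \<Omega> c" by blast
      have sn': "src (?r2 (offs R2 j + i')) = fstates (R2 j) ! i'" using state_at[OF fr2 ir2 i'(2)] .
      have "cost_inf Cst ?r2 n (offs R2 j + i') \<le> (K + 2) * B"
      proof -
        have "cost_inf Cst ?r2 n (offs R2 j + i') \<le> (offs R2 j + i') - n" by (rule cost_le_len)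
        also have "\<dots> \<le> B" using ji i' B2[of j] by simp
        also have "\<dots> \<le> (K + 2) * B" by simp
        finally show ?thesis .
      qed
      then show ?thesis using odd i' ji sn sn' by (intro cor_le) (auto simp: c_def)
    next
      case False
      then have "c \<in> C1set \<Omega> (R2 j)" unfolding C1set_def using ji(1) oddc
        by (auto simp: c_def intro!: exI[of _ i])
      then obtain c1 where c1: "max_opt (C1set \<Omega> (R2 j)) = Some c1" "c \<le> c1"
        using max_opt_ge[OF fin_C1] by blast
      then have "max_opt (C1set \<Omega> (R1 j)) = Some c1" using run_type_eqD(4)[OF ty[of j]] by simp
      then have "c1 \<in> C1set \<Omega> (R1 j)" by (rule max_opt_in[OF fin_C1])
      then obtain i1 where i1: "i1 \<le> length (R1 j)" "c1 = \<Omega> (fstates (R1 j) ! i1)" "odd c1"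
        "\<And>j'. i1 < j' \<Longrightarrow> j' \<le> length (R1 j) \<Longrightarrow> \<Omega> (fstates (R1 j) ! j') \<notin> Ans \<Omega> c1"
        unfolding C1set_def by auto
      define p1 where "p1 = offs R1 j + i1"
      have sp1: "src (?r1 p1) = fstates (R1 j) ! i1" using state_at[OF fr1 ir1 i1(1)] by (simp add: p1_def)
      have "N \<le> p1" using jN offs_ge[OF ne1, of j] by (simp add: p1_def)
      then have "Cor \<Omega> Cst ?r1 p1 \<le> enat K" by (rule bnd)
      then obtain n1 where n1: "p1 < n1" "\<Omega> (src (?r1 n1)) \<in> Ans \<Omega> c1" "cost_inf Cst ?r1 p1 n1 \<le> K"
        using cor_ex[of \<Omega> ?r1 p1 Cst K] i1(2,3) sp1 by auto
      obtain j' i1' where ji1: "i1' < length (R1 j')" "n1 = offs R1 j' + i1'" using block_decomp[OF ne1] by blast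
      have sn1: "src (?r1 n1) = fstates (R1 j') ! i1'" using state_at[OF fr1 ir1, of i1' j'] ji1 by simp
      have jj': "j < j'"
      proof (rule ccontr)
        assume "\<not> j < j'"
        then consider "j' < j" | "j' = j" by linarith
        then show False
        proof cases
          case 1
          then have "offs R1 (Suc j') \<le> offs R1 j" by (intro offs_mono) simp
          then show False using n1(1) ji1 by (simp add: p1_def offs_Suc)
        next
          case 2
          then show False using i1(4)[of i1'] n1 ji1 sn1 by (simp add: p1_def)
        qed
      qed
      define e where "e = \<Omega> (src (?r1 n1))"
      have e: "even e" "c1 < e" using n1(2) by (auto simp: e_def Ans_def)
      have "e \<in> C0set \<Omega> (R1 j')" unfolding C0set_def using ji1(1) e sn1
        by (auto simp: e_def intro!: exI[of _ i1'])
      then obtain e0 where e0: "max_opt (C0set \<Omega> (R1 j')) = Some e0" "e \<le> e0"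
        using max_opt_ge[OF fin_C0] by blast
      then have "max_opt (C0set \<Omega> (R2 j')) = Some e0" using run_type_eqD(3)[OF ty[of j']] by simp
      then have "e0 \<in> C0set \<Omega> (R2 j')" by (rule max_opt_in[OF fin_C0])
      then obtain i2 where i2: "i2 \<le> length (R2 j')" "e0 = \<Omega> (fstates (R2 j') ! i2)" "even e0"
        unfolding C0set_def by auto
      define n' where "n' = offs R2 j' + i2"
      have sn': "src (?r2 n') = fstates (R2 j') ! i2" using state_at[OF fr2 ir2 i2(1)] by (simp add: n'_def)
      have ans: "\<Omega> (src (?r2 n')) \<in> Ans \<Omega> (\<Omega> (src (?r2 n)))"
        using sn sn' i2 e e0 c1 by (auto simp: Ans_def c_def)
      have o2: "offs R2 (Suc j) \<le> offs R2 j'" using jj' by (intro offs_mono) simp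
      have o1: "offs R1 (Suc j) \<le> offs R1 j'" using jj' by (intro offs_mono) simp
      have nn': "n < offs R2 (Suc j)" using ji by (simp add: offs_Suc)
      have "offs R2 j' \<le> n'" by (simp add: n'_def)
      have c_a: "cost_inf Cst ?r2 n n' = cost_inf Cst ?r2 n (offs R2 (Suc j)) +
             (cost_inf Cst ?r2 (offs R2 (Suc j)) (offs R2 j') + cost_inf Cst ?r2 (offs R2 j') n')"
        using cost_split[of n "offs R2 (Suc j)" n' Cst ?r2] cost_split[of "offs R2 (Suc j)" "offs R2 j'" n' Cst ?r2]
          nn' o2 \<open>offs R2 j' \<le> n'\<close> by simp
      have c1b: "cost_inf Cst ?r2 n (offs R2 (Suc j)) \<le> B"
        using cost_le_len[of Cst ?r2 n "offs R2 (Suc j)"] ji B2[of j] by (simp add: offs_Suc)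
      have c3b: "cost_inf Cst ?r2 (offs R2 j') n' \<le> B"
        using cost_le_len[of Cst ?r2 "offs R2 j'" n'] i2(1) B2[of j'] by (simp add: n'_def)
      have pw: "cost_inf Cst ?r2 (offs R2 k) (offs R2 (Suc k)) \<le> B * cost_inf Cst ?r1 (offs R1 k) (offs R1 (Suc k))" for k
      proof (cases "cost_inf Cst ?r1 (offs R1 k) (offs R1 (Suc k)) = 0")
        case True
        then have "cost_inf Cst ?r2 (offs R2 k) (offs R2 (Suc k)) = 0"
          using block_cost_zero[OF ne1] block_cost_zero[OF ne2] run_type_eqD(5)[OF ty[of k]] by simp
        then show ?thesis by simp
      next
        case False
        have "cost_inf Cst ?r2 (offs R2 k) (offs R2 (Suc k)) \<le> B"
          using block_cost_le[of Cst ?r2 R2 k] B2[of k] by simp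
        also have "\<dots> \<le> B * cost_inf Cst ?r1 (offs R1 k) (offs R1 (Suc k))" using False by simp
        finally show ?thesis .
      qed
      have "cost_inf Cst ?r2 (offs R2 (Suc j)) (offs R2 j') = (\<Sum>k\<in>{Suc j..<j'}. cost_inf Cst ?r2 (offs R2 k) (offs R2 (Suc k)))"
        using jj' by (intro cost_blocks) simp
      also have "\<dots> \<le> (\<Sum>k\<in>{Suc j..<j'}. B * cost_inf Cst ?r1 (offs R1 k) (offs R1 (Suc k)))"
        by (intro sum_mono pw)
      also have "\<dots> = B * (\<Sum>k\<in>{Suc j..<j'}. cost_inf Cst ?r1 (offs R1 k) (offs R1 (Suc k)))"
        by (rule sum_distrib_left[symmetric])
      also have "\<dots> = B * cost_inf Cst ?r1 (offs R1 (Suc j)) (offs R1 j')"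
        using cost_blocks[of "Suc j" j' Cst ?r1 R1] jj' by simp
      also have "\<dots> \<le> B * cost_inf Cst ?r1 p1 n1"
      proof -
        have "p1 \<le> offs R1 (Suc j)" using i1(1) by (simp add: p1_def offs_Suc)
        moreover have "offs R1 j' \<le> n1" using ji1 by simp
        ultimately show ?thesis by (intro mult_le_mono2 cost_mono)
      qed
      also have "\<dots> \<le> B * K" using n1(3) by simp
      finally have c2b: "cost_inf Cst ?r2 (offs R2 (Suc j)) (offs R2 j') \<le> B * K" .
      have "cost_inf Cst ?r2 n n' \<le> (K + 2) * B"
        using c_a c1b c2b c3b by (simp add: algebra_simps)
      moreover have "n < n'" using nn' o2 \<open>offs R2 j' \<le> n'\<close> by simp
      ultimately show ?thesis using odd ans by (intro cor_le)
    qed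
  qed
qed

lemma dir:
  assumes fr1: "\<And>j. fin_run \<delta> (R1 j)" and fr2: "\<And>j. fin_run \<delta> (R2 j)"
    and ty: "\<And>j. run_type \<Omega> Cst (R1 j) = run_type \<Omega> Cst (R2 j)"
    and B1: "\<And>j. length (R1 j) \<le> B" and B2: "\<And>j. length (R2 j) \<le> B"
    and acc: "accepting_run \<delta> \<Omega> Cst (concat_inf R1)"
  shows "accepting_run \<delta> \<Omega> Cst (concat_inf R2)"
proof -
  have ir1: "inf_run \<delta> (concat_inf R1)" using acc by (simp add: accepting_run_def)
  then have "\<forall>k. tgt (last (R1 k)) = src (hd (R1 (Suc k)))" using inf_run_iff[OF fr1] by simp
  then have "\<forall>k. tgt (last (R2 k)) = src (hd (R2 (Suc k)))"
    using run_type_eqD(1,2)[OF ty] by simp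
  then have ir2: "inf_run \<delta> (concat_inf R2)" using inf_run_iff[OF fr2] by simp
  have "limsup (\<lambda>n. Cor \<Omega> Cst (concat_inf R1) n) < \<infinity>" using acc by (simp add: accepting_run_def)
  then obtain K N where KN: "\<forall>n\<ge>N. Cor \<Omega> Cst (concat_inf R1) n \<le> enat K"
    unfolding limsup_fin_iff by blast
  have "\<forall>n\<ge>offs R2 N. Cor \<Omega> Cst (concat_inf R2) n \<le> enat ((K + 2) * B)"
    using main[OF fr1 fr2 ty B1 B2 ir1 ir2] KN by blast
  then have "limsup (\<lambda>n. Cor \<Omega> Cst (concat_inf R2) n) < \<infinity>"
    unfolding limsup_fin_iff by blast
  then show ?thesis using ir2 by (simp add: accepting_run_def)
qed

theorem corollary1:
  fixes \<delta> :: "'q::finite \<Rightarrow> 'a::finite \<Rightarrow> 'q"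
    and \<Omega> :: "'q \<Rightarrow> nat"
    and Cst :: "'q \<Rightarrow> 'a \<Rightarrow> bool"
    and R1 R2 :: "nat \<Rightarrow> ('q,'a) trans list"
  assumes "\<exists>q. even (\<Omega> q)" and "\<exists>q. odd (\<Omega> q)"
    and "\<And>j. fin_run \<delta> (R1 j)" and "\<And>j. fin_run \<delta> (R2 j)"
    and "\<And>j. run_type \<Omega> Cst (R1 j) = run_type \<Omega> Cst (R2 j)"
    and "\<exists>B. \<forall>j. length (R1 j) \<le> B" and "\<exists>B. \<forall>j. length (R2 j) \<le> B"
  shows "accepting_run \<delta> \<Omega> Cst (concat_inf R1) \<longleftrightarrow> accepting_run \<delta> \<Omega> Cst (concat_inf R2)"
proof -
  obtain B1 B2 where b1: "\<forall>j. length (R1 j) \<le> B1" and b2: "\<forall>j. length (R2 j) \<le> B2"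
    using assms(6,7) by blast
  have l1: "\<And>j. length (R1 j) \<le> max B1 B2" using b1 by (meson max.coboundedI1)
  have l2: "\<And>j. length (R2 j) \<le> max B1 B2" using b2 by (meson max.coboundedI2)
  show ?thesis
  proof
    assume "accepting_run \<delta> \<Omega> Cst (concat_inf R1)"
    then show "accepting_run \<delta> \<Omega> Cst (concat_inf R2)"
      using dir[of \<delta> R1 R2 \<Omega> Cst "max B1 B2"] assms(3,4,5) l1 l2 by blast
  next
    assume "accepting_run \<delta> \<Omega> Cst (concat_inf R2)"
    then show "accepting_run \<delta> \<Omega> Cst (concat_inf R1)"
      using dir[of \<delta> R2 R1 \<Omega> Cst "max B1 B2"] assms(3,4) assms(5)[symmetric] l1 l2 by blast
  qed
qed

end
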